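(* Let $\{X(s)\}_{s\ge 0}$ be a centered Gaussian process with continuous sample paths whose covariance kernel $R$ satisfies $R(cs,ct)=c^{2\rho}R(s,t)$ for some $\rho>0$ and all $c>0$, $s,t>0$. Let $h(x)=x^{-\rho}R(1,x)$ for $x\ge 1$. Fix $\alpha>1$, let $t_n=\alpha^n$, and set \[ \gamma_{k,l}=\mathrm{Cov}\big(X(t_{k+1})-X(t_k),\,X(t_{l+1})-X(t_l)\big),\qquad \gamma_k=\gamma_{k,k}. \] For integers $j\ge 0$ define $L_j(\alpha)=h(\alpha^j)-\alpha^{-\rho}\{h(\alpha^{j+1})+h(\alpha^{|j-1|})\}+\alpha^{-2\rho}h(\alpha^j)$. Then, whenever $\gamma_k,\gamma_l>0$, \[ \delta_{k,l}:=\frac{\gamma_{k,l}}{\gamma_k^{1/2}\gamma_l^{1/2}}=\frac{L_{|k-l|}(\alpha)}{L_0(\alpha)}. \] *)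

theory Defs
  imports "HOL-Probability.Probability"
begin

definition gaussian_rv :: "'a measure \<Rightarrow> ('a \<Rightarrow> real) \<Rightarrow> bool" where
  "gaussian_rv M Y \<longleftrightarrow> Y \<in> borel_measurable M \<and>
     ((\<exists>\<mu> \<sigma>. \<sigma> > 0 \<and> distributed M lborel Y (normal_density \<mu> \<sigma>))
      \<or> (\<exists>c. AE \<omega> in M. Y \<omega> = c))"

text \<open>Gaussian process indexed by [0,\<infinity>): all finite linear combinations of the
  values are Gaussian (equivalently, finite-dimensional distributions are jointly Gaussian).\<close>
definition gaussian_process :: "'a measure \<Rightarrow> (real \<Rightarrow> 'a \<Rightarrow> real) \<Rightarrow> bool" where
  "gaussian_process M X \<longleftrightarrow> prob_space M \<and>
     (\<forall>T c. finite T \<and> T \<subseteq> {0..} \<longrightarrow> gaussian_rv M (\<lambda>\<omega>. \<Sum>s\<in>T. c s * X s \<omega>))"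

definition centered :: "'a measure \<Rightarrow> (real \<Rightarrow> 'a \<Rightarrow> real) \<Rightarrow> bool" where
  "centered M X \<longleftrightarrow> (\<forall>s\<ge>0. integrable M (X s) \<and> integral\<^sup>L M (X s) = 0)"

definition continuous_paths :: "'a measure \<Rightarrow> (real \<Rightarrow> 'a \<Rightarrow> real) \<Rightarrow> bool" where
  "continuous_paths M X \<longleftrightarrow> (\<forall>\<omega>\<in>space M. continuous_on {0..} (\<lambda>s. X s \<omega>))"

definition cov :: "'a measure \<Rightarrow> ('a \<Rightarrow> real) \<Rightarrow> ('a \<Rightarrow> real) \<Rightarrow> real" where
  "cov M Y Z = integral\<^sup>L M (\<lambda>\<omega>. (Y \<omega> - integral\<^sup>L M Y) * (Z \<omega> - integral\<^sup>L M Z))"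

definition covariance_kernel :: "'a measure \<Rightarrow> (real \<Rightarrow> 'a \<Rightarrow> real) \<Rightarrow> (real \<Rightarrow> real \<Rightarrow> real) \<Rightarrow> bool" where
  "covariance_kernel M X R \<longleftrightarrow>
     (\<forall>s\<ge>0. integrable M (\<lambda>\<omega>. (X s \<omega>)\<^sup>2)) \<and> (\<forall>s\<ge>0. \<forall>t\<ge>0. R s t = cov M (X s) (X t))"

definition hfun :: "real \<Rightarrow> (real \<Rightarrow> real \<Rightarrow> real) \<Rightarrow> real \<Rightarrow> real" where
  "hfun \<rho> R x = x powr (-\<rho>) * R 1 x"

definition Lfun :: "real \<Rightarrow> (real \<Rightarrow> real \<Rightarrow> real) \<Rightarrow> real \<Rightarrow> nat \<Rightarrow> real" where
  "Lfun \<rho> R \<alpha> j = hfun \<rho> R (\<alpha> ^ j)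
     - \<alpha> powr (-\<rho>) * (hfun \<rho> R (\<alpha> ^ (j + 1)) + hfun \<rho> R (\<alpha> ^ nat \<bar>int j - 1\<bar>))
     + \<alpha> powr (-2 * \<rho>) * hfun \<rho> R (\<alpha> ^ j)"

definition gam :: "'a measure \<Rightarrow> (real \<Rightarrow> 'a \<Rightarrow> real) \<Rightarrow> real \<Rightarrow> nat \<Rightarrow> nat \<Rightarrow> real" where
  "gam M X \<alpha> k l = cov M (\<lambda>\<omega>. X (\<alpha> ^ (k + 1)) \<omega> - X (\<alpha> ^ k) \<omega>)
                           (\<lambda>\<omega>. X (\<alpha> ^ (l + 1)) \<omega> - X (\<alpha> ^ l) \<omega>)"

end

theory Submission
  imports Defs
begin

lemma integrable_prod_L2:
  fixes f g :: "'a \<Rightarrow> real"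
  assumes "f \<in> borel_measurable M" "g \<in> borel_measurable M"
    "integrable M (\<lambda>x. (f x)\<^sup>2)" "integrable M (\<lambda>x. (g x)\<^sup>2)"
  shows "integrable M (\<lambda>x. f x * g x)"
proof (rule Bochner_Integration.integrable_bound[where f="\<lambda>x. (f x)\<^sup>2 + (g x)\<^sup>2"])
  show "integrable M (\<lambda>x. (f x)\<^sup>2 + (g x)\<^sup>2)" using assms by auto
  show "(\<lambda>x. f x * g x) \<in> borel_measurable M" using assms by auto
  show "AE x in M. norm (f x * g x) \<le> norm ((f x)\<^sup>2 + (g x)\<^sup>2)"
  proof (rule AE_I2)
    fix x
    have "0 \<le> (\<bar>f x\<bar> - \<bar>g x\<bar>)\<^sup>2" by simp
    then have "2 * \<bar>f x * g x\<bar> \<le> (f x)\<^sup>2 + (g x)\<^sup>2"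
      by (simp add: power2_diff abs_mult)
    then show "norm (f x * g x) \<le> norm ((f x)\<^sup>2 + (g x)\<^sup>2)" by simp
  qed
qed

lemma int4:
  fixes f1 f2 f3 f4 :: "'a \<Rightarrow> real"
  assumes "integrable M f1" "integrable M f2" "integrable M f3" "integrable M f4"
  shows "integral\<^sup>L M (\<lambda>\<omega>. f1 \<omega> - f2 \<omega> - f3 \<omega> + f4 \<omega>)
    = integral\<^sup>L M f1 - integral\<^sup>L M f2 - integral\<^sup>L M f3 + integral\<^sup>L M f4"
  using assms by simp

lemma pwn:
  fixes \<alpha> \<rho> :: real assumes "\<alpha> > 1"
  shows "(\<alpha>^n) powr (real m * \<rho>) = (\<alpha> powr \<rho>)^(n*m)"
proof -
  have a0: "\<alpha> > 0" using assms by simp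
  have "(\<alpha>^n) powr (real m * \<rho>) = (\<alpha> powr real n) powr (real m * \<rho>)"
    using a0 by (simp add: powr_realpow)
  also have "\<dots> = \<alpha> powr (real n * (real m * \<rho>))" by (rule powr_powr)
  also have "real n * (real m * \<rho>) = \<rho> * real (n*m)" by simp
  also have "\<alpha> powr (\<rho> * real (n*m)) = (\<alpha> powr \<rho>) powr real (n*m)" by (rule powr_powr[symmetric])
  also have "\<dots> = (\<alpha> powr \<rho>)^(n*m)" using a0 by (simp only: powr_realpow powr_gt_zero)
  finally show ?thesis .
qed

lemma alg:
  fixes R :: "real \<Rightarrow> real \<Rightarrow> real" and \<rho> \<alpha> :: real and g :: "nat \<Rightarrow> nat \<Rightarrow> real"
  assumes rho: "\<rho> > 0"
    and sc: "\<And>c s t. c > 0 \<Longrightarrow> s > 0 \<Longrightarrow> t > 0 \<Longrightarrow> R (c * s) (c * t) = c powr (2 * \<rho>) * R s t"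
    and al: "\<alpha> > 1"
    and Rsym: "\<And>s t. s \<ge> 0 \<Longrightarrow> t \<ge> 0 \<Longrightarrow> R s t = R t s"
    and gamR: "\<And>a b. g a b = R (\<alpha>^(a+1)) (\<alpha>^(b+1)) - R (\<alpha>^(a+1)) (\<alpha>^b)
      - R (\<alpha>^a) (\<alpha>^(b+1)) + R (\<alpha>^a) (\<alpha>^b)"
    and "g k k > 0" and "g l l > 0"
  shows "g k l / (sqrt (g k k) * sqrt (g l l))
           = Lfun \<rho> R \<alpha> (nat \<bar>int k - int l\<bar>) / Lfun \<rho> R \<alpha> 0"
proof -
  define p where "p = \<alpha> powr \<rho>"
  have p1: "p > 1" unfolding p_def using rho al by simp
  have Rle: "R (\<alpha>^a) (\<alpha>^(a+d)) = p^(2*a+d) * hfun \<rho> R (\<alpha>^d)" for a d :: nat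
  proof -
    have "R (\<alpha>^a) (\<alpha>^(a+d)) = R (\<alpha>^a * 1) (\<alpha>^a * \<alpha>^d)" by (simp add: power_add)
    also have "\<dots> = (\<alpha>^a) powr (2*\<rho>) * R 1 (\<alpha>^d)"
      using sc[of "\<alpha>^a" 1 "\<alpha>^d"] al by simp
    also have "R 1 (\<alpha>^d) = (\<alpha>^d) powr \<rho> * hfun \<rho> R (\<alpha>^d)"
      unfolding hfun_def using al by (simp add: powr_minus field_simps)
    finally have "R (\<alpha>^a) (\<alpha>^(a+d)) = (\<alpha>^a) powr (real 2 * \<rho>) * (\<alpha>^d) powr (real 1 * \<rho>) * hfun \<rho> R (\<alpha>^d)"
      by simp
    also have "\<dots> = p^(2*a+d) * hfun \<rho> R (\<alpha>^d)"
      unfolding pwn[OF al] p_def by (simp add: power_add mult_ac)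
    finally show ?thesis .
  qed
  have Rge: "R (\<alpha>^(a+d)) (\<alpha>^a) = p^(2*a+d) * hfun \<rho> R (\<alpha>^d)" for a d :: nat
  proof -
    have "R (\<alpha>^(a+d)) (\<alpha>^a) = R (\<alpha>^a) (\<alpha>^(a+d))" by (rule Rsym) (use al in simp_all)
    with Rle[of a d] show ?thesis by simp
  qed
  have am1: "\<alpha> powr (-\<rho>) = 1/p" unfolding p_def by (rule powr_minus_divide)
  have "\<alpha> powr (2*\<rho>) = p^2" unfolding p_def mult_2 powr_add power2_eq_square ..
  then have am2: "\<alpha> powr (-2*\<rho>) = 1/p^2" using powr_minus_divide[of \<alpha> "2*\<rho>"] by simp
  note am = am1 am2
  have G0: "g a (a+d) = p^(2*a+d+2) * Lfun \<rho> R \<alpha> d" for a d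
  proof (cases d)
    case 0
    have E1: "R (\<alpha>^(a+1)) (\<alpha>^(a+1)) = p^(2*a+2) * hfun \<rho> R 1"
      using Rle[of "a+1" 0] by simp
    have E2: "R (\<alpha>^(a+1)) (\<alpha>^a) = p^(2*a+1) * hfun \<rho> R \<alpha>"
      using Rge[of a 1] by simp
    have E3: "R (\<alpha>^a) (\<alpha>^(a+1)) = p^(2*a+1) * hfun \<rho> R \<alpha>"
      using Rle[of a 1] by simp
    have E4: "R (\<alpha>^a) (\<alpha>^a) = p^(2*a) * hfun \<rho> R 1"
      using Rle[of a 0] by simp
    have H: "g a (a+d) = p^(2*a+2) * hfun \<rho> R 1 - p^(2*a+1) * hfun \<rho> R \<alpha>
       - p^(2*a+1) * hfun \<rho> R \<alpha> + p^(2*a) * hfun \<rho> R 1"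
      using gamR[of a a] 0 E1 E2 E3 E4 by simp
    show ?thesis unfolding H Lfun_def am using p1 0 by (simp add: power_add power2_eq_square field_simps)
  next
    case (Suc e)
    have E1: "R (\<alpha>^(a+1)) (\<alpha>^(a+d+1)) = p^(2*a+d+2) * hfun \<rho> R (\<alpha>^d)"
      using Rle[of "a+1" d] by (simp add: ac_simps)
    have E2: "R (\<alpha>^(a+1)) (\<alpha>^(a+d)) = p^(2*a+d+1) * hfun \<rho> R (\<alpha>^e)"
      using Rle[of "a+1" e] Suc by (simp add: ac_simps)
    have E3: "R (\<alpha>^a) (\<alpha>^(a+d+1)) = p^(2*a+d+1) * hfun \<rho> R (\<alpha>^(d+1))"
      using Rle[of a "d+1"] by (simp add: ac_simps)
    have E4: "R (\<alpha>^a) (\<alpha>^(a+d)) = p^(2*a+d) * hfun \<rho> R (\<alpha>^d)"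
      using Rle[of a d] by simp
    have H: "g a (a+d) = p^(2*a+d+2) * hfun \<rho> R (\<alpha>^d) - p^(2*a+d+1) * hfun \<rho> R (\<alpha>^e)
       - p^(2*a+d+1) * hfun \<rho> R (\<alpha>^(d+1)) + p^(2*a+d) * hfun \<rho> R (\<alpha>^d)"
      using gamR[of a "a+d"] E1 E2 E3 E4 by simp
    have N: "nat \<bar>int d - 1\<bar> = e" using Suc by simp
    show ?thesis unfolding H Lfun_def am N using p1 by (simp add: power_add power2_eq_square field_simps)
  qed
  have gsym: "g a b = g b a" for a b
    using gamR[of a b] gamR[of b a] Rsym[of "\<alpha>^a" "\<alpha>^b"] Rsym[of "\<alpha>^(a+1)" "\<alpha>^(b+1)"]
      Rsym[of "\<alpha>^(a+1)" "\<alpha>^b"] Rsym[of "\<alpha>^a" "\<alpha>^(b+1)"] al by simp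
  have G: "g a b = p^(a+b+2) * Lfun \<rho> R \<alpha> (nat \<bar>int a - int b\<bar>)" for a b
  proof (cases "a \<le> b")
    case True
    then obtain d where b: "b = a + d" using le_Suc_ex by blast
    have e1: "a+b+2 = 2*a+d+2" using b by simp
    have e2: "nat \<bar>int a - int b\<bar> = d" using b by simp
    show ?thesis unfolding e1 e2 unfolding b by (rule G0)
  next
    case False
    then obtain d where b: "a = b + d" using le_Suc_ex[of b a] by auto
    have e1: "a+b+2 = 2*b+d+2" using b by simp
    have e2: "nat \<bar>int a - int b\<bar> = d" using b by simp
    show ?thesis unfolding e1 e2 gsym[of a b] unfolding b by (rule G0)
  qed
  have sq: "(p^(n+1))\<^sup>2 = p^(n+n+2)" for n :: nat
  proof -
    have "(p^(n+1))\<^sup>2 = p^((n+1)*2)" by (rule power_mult[symmetric])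
    also have "(n+1)*2 = n+n+2" by simp
    finally show ?thesis .
  qed
  have Gk: "g k k = (p^(k+1))\<^sup>2 * Lfun \<rho> R \<alpha> 0"
    unfolding sq using G[of k k] by simp
  have Gl: "g l l = (p^(l+1))\<^sup>2 * Lfun \<rho> R \<alpha> 0"
    unfolding sq using G[of l l] by simp
  have L0: "Lfun \<rho> R \<alpha> 0 > 0" using assms(6) Gk p1
    by (metis zero_less_mult_pos zero_less_power2 less_numeral_extra(3) power_not_zero not_one_less_zero order.strict_trans zero_less_one)
  have "sqrt (g k k) * sqrt (g l l) = p^(k+1) * p^(l+1) * Lfun \<rho> R \<alpha> 0"
    unfolding Gk Gl using p1 L0 by (simp add: real_sqrt_mult)
  then show ?thesis using G[of k l] p1 L0 by (simp add: power_add)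
qed


theorem lemma4p5:
  fixes M :: "'a measure" and X :: "real \<Rightarrow> 'a \<Rightarrow> real"
    and R :: "real \<Rightarrow> real \<Rightarrow> real" and \<rho> \<alpha> :: real and k l :: nat
  assumes "gaussian_process M X"
    and "centered M X"
    and "continuous_paths M X"
    and "covariance_kernel M X R"
    and "\<rho> > 0"
    and "\<And>c s t. c > 0 \<Longrightarrow> s > 0 \<Longrightarrow> t > 0 \<Longrightarrow> R (c * s) (c * t) = c powr (2 * \<rho>) * R s t"
    and "\<alpha> > 1"
    and "gam M X \<alpha> k k > 0" and "gam M X \<alpha> l l > 0"
  shows "gam M X \<alpha> k l / (sqrt (gam M X \<alpha> k k) * sqrt (gam M X \<alpha> l l))
           = Lfun \<rho> R \<alpha> (nat \<bar>int k - int l\<bar>) / Lfun \<rho> R \<alpha> 0"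
proof -
  note cen = assms(2)[unfolded centered_def]
  note ck = assms(4)[unfolded covariance_kernel_def]
  have meas: "X s \<in> borel_measurable M" if "s \<ge> 0" for s
    using cen that by auto
  have int0: "integral\<^sup>L M (X s) = 0" if "s \<ge> 0" for s using cen that by auto
  have RI: "R s t = integral\<^sup>L M (\<lambda>\<omega>. X s \<omega> * X t \<omega>)" if "s \<ge> 0" "t \<ge> 0" for s t
    using ck that int0 unfolding cov_def by simp
  have Rsym: "R s t = R t s" if "s \<ge> 0" "t \<ge> 0" for s t
    using RI that by (simp add: mult.commute)
  have ip: "integrable M (\<lambda>\<omega>. X s \<omega> * X t \<omega>)" if "s \<ge> 0" "t \<ge> 0" for s t
    using integrable_prod_L2[OF meas meas] ck that by blast
  have gamR: "gam M X \<alpha> a b = R (\<alpha>^(a+1)) (\<alpha>^(b+1)) - R (\<alpha>^(a+1)) (\<alpha>^b)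
      - R (\<alpha>^a) (\<alpha>^(b+1)) + R (\<alpha>^a) (\<alpha>^b)" for a b
  proof -
    let ?a1 = "\<alpha>^(a+1)" and ?a0 = "\<alpha>^a" and ?b1 = "\<alpha>^(b+1)" and ?b0 = "\<alpha>^b"
    have nn: "?a1 \<ge> 0" "?a0 \<ge> 0" "?b1 \<ge> 0" "?b0 \<ge> 0" using assms(7) by auto
    have i1: "integral\<^sup>L M (\<lambda>\<omega>. X ?a1 \<omega> - X ?a0 \<omega>) = 0"
      using cen nn int0 by (simp add: Bochner_Integration.integral_diff)
    have i2: "integral\<^sup>L M (\<lambda>\<omega>. X ?b1 \<omega> - X ?b0 \<omega>) = 0"
      using cen nn int0 by (simp add: Bochner_Integration.integral_diff)
    have e: "(\<lambda>\<omega>. (X ?a1 \<omega> - X ?a0 \<omega>) * (X ?b1 \<omega> - X ?b0 \<omega>)) =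
      (\<lambda>\<omega>. ((X ?a1 \<omega> * X ?b1 \<omega> - X ?a1 \<omega> * X ?b0 \<omega>) - X ?a0 \<omega> * X ?b1 \<omega>) + X ?a0 \<omega> * X ?b0 \<omega>)"
      by (auto simp: algebra_simps)
    have "gam M X \<alpha> a b = integral\<^sup>L M (\<lambda>\<omega>. ((X ?a1 \<omega> * X ?b1 \<omega> - X ?a1 \<omega> * X ?b0 \<omega>) - X ?a0 \<omega> * X ?b1 \<omega>) + X ?a0 \<omega> * X ?b0 \<omega>)"
      unfolding gam_def cov_def i1 i2 diff_zero e ..
    also have "\<dots> = R ?a1 ?b1 - R ?a1 ?b0 - R ?a0 ?b1 + R ?a0 ?b0"
      unfolding int4[OF ip[OF nn(1) nn(3)] ip[OF nn(1) nn(4)] ip[OF nn(2) nn(3)] ip[OF nn(2) nn(4)]]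
        RI[OF nn(1) nn(3)] RI[OF nn(1) nn(4)] RI[OF nn(2) nn(3)] RI[OF nn(2) nn(4)] ..
    finally show ?thesis .
  qed
  show ?thesis
    using alg[where g="gam M X \<alpha>" and R=R and \<rho>=\<rho> and \<alpha>=\<alpha> and k=k and l=l] assms(5,6,7,8,9) Rsym gamR
    by blast
qed

end
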